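(* Let $Q\in N_\kappa(\mathcal{H})$ be minimally represented by a triple $(\mathcal{K},A,\Gamma)$ and let $\Gamma_z:=(I+(z-z_0)(A-z)^{-1})\Gamma$. If there exist $z_0'\in\mathcal{D}(Q)$ and $0\neq h\in\mathcal{H}$ such that $$\frac{Q(z_0')-Q(\bar w)}{z_0'-\bar w}h=0\quad\text{for all } w\in\mathcal{D}(Q),$$ then $\Gamma_zh=0$ for all $z\in\mathcal{D}(Q)$.
   Context: $N_\kappa(\mathcal{H})$: operator functions meromorphic in $\mathbb{C}\setminus\mathbb{R}$ with $Q(\bar z)^*=Q(z)$ and kernel $\frac{Q(z)-Q(w)^*}{z-\bar w}$ having exactly $\kappa$ negative squares. Minimal representation: $Q(z)=Q(z_0)^*+(z-\bar z_0)\Gamma^+(I+(z-z_0)(A-z)^{-1})\Gamma$ with $A$ a self-adjoint relation in a Pontryagin space $\mathcal{K}$, $\Gamma:\mathcal{H}\to\mathcal{K}$ bounded, and $\mathcal{K}=\overline{\mathrm{span}}\{\Gamma_zh\}$; then $\rho(A)=\mathcal{D}(Q)$ and $[\Gamma_zh,\Gamma_wg]=(\frac{Q(z)-Q(\bar w)}{z-\bar w}h,g)$ (read as $Q'(z)$ when $z=\bar w$). *)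

theory Defs
  imports "HOL-Complex_Analysis.Complex_Analysis" "Jordan_Normal_Form.Char_Poly"
begin

definition hermitian_form :: "(complex \<Rightarrow> 'a::ab_group_add \<Rightarrow> 'a) \<Rightarrow> ('a \<Rightarrow> 'a \<Rightarrow> complex) \<Rightarrow> bool" where
  "hermitian_form sc ip \<longleftrightarrow>
     (\<forall>x y z. ip (x + y) z = ip x z + ip y z) \<and>
     (\<forall>a x y. ip (sc a x) y = a * ip x y) \<and>
     (\<forall>x y. ip y x = cnj (ip x y))"

definition inorm :: "('a \<Rightarrow> 'a \<Rightarrow> complex) \<Rightarrow> 'a \<Rightarrow> real" where
  "inorm ip x = sqrt (Re (ip x x))"

definition hilbert_space :: "(complex \<Rightarrow> 'a::ab_group_add \<Rightarrow> 'a) \<Rightarrow> ('a \<Rightarrow> 'a \<Rightarrow> complex) \<Rightarrow> bool" where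
  "hilbert_space sc ip \<longleftrightarrow>
     vector_space sc \<and> hermitian_form sc ip \<and>
     (\<forall>x. 0 \<le> Re (ip x x)) \<and> (\<forall>x. ip x x = 0 \<longrightarrow> x = 0) \<and>
     (\<forall>X. (\<forall>e>0. \<exists>N. \<forall>m\<ge>N. \<forall>n\<ge>N. inorm ip (X m - X n) < e)
          \<longrightarrow> (\<exists>L. (\<lambda>n. inorm ip (X n - L)) \<longlonglongrightarrow> 0))"

text \<open>Pontryagin space: an indefinite inner product space with a fundamental symmetry J
  such that [J.,.] is a Hilbert space inner product and the negative part
  (the -1 eigenspace of J) is finite dimensional.  Its topology is the J-norm topology.\<close>
definition pontryagin_space :: "(complex \<Rightarrow> 'a::ab_group_add \<Rightarrow> 'a) \<Rightarrow> ('a \<Rightarrow> 'a \<Rightarrow> complex) \<Rightarrow> ('a \<Rightarrow> 'a) \<Rightarrow> bool" where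
  "pontryagin_space sc ip J \<longleftrightarrow>
     vector_space sc \<and> hermitian_form sc ip \<and> Vector_Spaces.linear sc sc J \<and>
     (\<forall>x. J (J x) = x) \<and> (\<forall>x y. ip (J x) y = ip x (J y)) \<and>
     hilbert_space sc (\<lambda>x y. ip (J x) y) \<and>
     (\<exists>B. finite B \<and> {x. J x = - x} \<subseteq> module.span sc B)"

definition bounded_op :: "(complex \<Rightarrow> 'a::ab_group_add \<Rightarrow> 'a) \<Rightarrow> ('a \<Rightarrow> 'a \<Rightarrow> complex)
    \<Rightarrow> (complex \<Rightarrow> 'b::ab_group_add \<Rightarrow> 'b) \<Rightarrow> ('b \<Rightarrow> 'b \<Rightarrow> complex) \<Rightarrow> ('a \<Rightarrow> 'b) \<Rightarrow> bool" where
  "bounded_op sa ipa sb ipb T \<longleftrightarrow>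
     Vector_Spaces.linear sa sb T \<and> (\<exists>C. \<forall>x. inorm ipb (T x) \<le> C * inorm ipa x)"

definition op_adjoint :: "('a \<Rightarrow> 'a \<Rightarrow> complex) \<Rightarrow> ('b \<Rightarrow> 'b \<Rightarrow> complex) \<Rightarrow> ('a \<Rightarrow> 'b) \<Rightarrow> 'b \<Rightarrow> 'a" where
  "op_adjoint ipa ipb T y = (THE u. \<forall>x. ipb (T x) y = ipa x u)"

definition rel_adjoint :: "('a \<Rightarrow> 'a \<Rightarrow> complex) \<Rightarrow> ('a \<times> 'a) set \<Rightarrow> ('a \<times> 'a) set" where
  "rel_adjoint ip A = {(f, g). \<forall>(u, v) \<in> A. ip g u = ip f v}"

definition selfadjoint_relation :: "('a \<Rightarrow> 'a \<Rightarrow> complex) \<Rightarrow> ('a \<times> 'a) set \<Rightarrow> bool" where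
  "selfadjoint_relation ip A \<longleftrightarrow> A = rel_adjoint ip A"

text \<open>(A - z)^{-1} as a relation.\<close>
definition rel_resolvent_rel :: "(complex \<Rightarrow> 'a::ab_group_add \<Rightarrow> 'a) \<Rightarrow> ('a \<times> 'a) set \<Rightarrow> complex \<Rightarrow> ('a \<times> 'a) set" where
  "rel_resolvent_rel sc A z = {(g - sc z f, f) | f g. (f, g) \<in> A}"

definition resolvent_set :: "(complex \<Rightarrow> 'a::ab_group_add \<Rightarrow> 'a) \<Rightarrow> ('a \<Rightarrow> 'a \<Rightarrow> complex) \<Rightarrow> ('a \<Rightarrow> 'a)
    \<Rightarrow> ('a \<times> 'a) set \<Rightarrow> complex set" where
  "resolvent_set sc ip J A = {z. \<exists>R. bounded_op sc (\<lambda>x y. ip (J x) y) sc (\<lambda>x y. ip (J x) y) R \<and>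
       (\<forall>x y. (x, y) \<in> rel_resolvent_rel sc A z \<longleftrightarrow> y = R x)}"

definition resolvent :: "(complex \<Rightarrow> 'a::ab_group_add \<Rightarrow> 'a) \<Rightarrow> ('a \<times> 'a) set \<Rightarrow> complex \<Rightarrow> 'a \<Rightarrow> 'a" where
  "resolvent sc A z x = (THE y. (x, y) \<in> rel_resolvent_rel sc A z)"

text \<open>D(Q): the points near which Q is (weakly) holomorphic.\<close>
definition holo_dom :: "('h \<Rightarrow> 'h \<Rightarrow> complex) \<Rightarrow> (complex \<Rightarrow> 'h \<Rightarrow> 'h) \<Rightarrow> complex set" where
  "holo_dom ip Q = {z. \<exists>U. open U \<and> z \<in> U \<and> (\<forall>h g. (\<lambda>w. ip (Q w h) g) holomorphic_on U)}"

definition op_pole_at :: "('h \<Rightarrow> 'h \<Rightarrow> complex) \<Rightarrow> (complex \<Rightarrow> 'h \<Rightarrow> 'h) \<Rightarrow> complex \<Rightarrow> bool" where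
  "op_pole_at ip Q z \<longleftrightarrow> (\<exists>n::nat. \<exists>U. open U \<and> z \<in> U \<and>
      (\<forall>h g. \<exists>f. f holomorphic_on U \<and> (\<forall>w\<in>U - {z}. f w = (w - z) ^ n * ip (Q w h) g)))"

text \<open>(N_Q(z,w) h, g) with N_Q(z,w) = (Q(z) - Q(w)^*)/(z - conj w), Q(w)^* = Q(conj w),
  read as Q'(z) when z = conj w.\<close>
definition kerQ :: "('h::ab_group_add \<Rightarrow> 'h \<Rightarrow> complex) \<Rightarrow> (complex \<Rightarrow> 'h \<Rightarrow> 'h) \<Rightarrow> complex \<Rightarrow> complex \<Rightarrow> 'h \<Rightarrow> 'h \<Rightarrow> complex" where
  "kerQ ip Q z w h g =
     (if z = cnj w then deriv (\<lambda>u. ip (Q u h) g) z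
      else ip (Q z h - Q (cnj w) h) g / (z - cnj w))"

definition neg_eig_count :: "complex mat \<Rightarrow> nat" where
  "neg_eig_count M = (\<Sum>r\<in>{r::real. r < 0 \<and> poly (char_poly M) (complex_of_real r) = 0}.
                        order (complex_of_real r) (char_poly M))"

definition gram :: "('h::ab_group_add \<Rightarrow> 'h \<Rightarrow> complex) \<Rightarrow> (complex \<Rightarrow> 'h \<Rightarrow> 'h) \<Rightarrow> nat \<Rightarrow> (nat \<Rightarrow> complex) \<Rightarrow> (nat \<Rightarrow> 'h) \<Rightarrow> complex mat" where
  "gram ip Q n zs hs = mat n n (\<lambda>(i, j). kerQ ip Q (zs i) (zs j) (hs i) (hs j))"

definition kernel_neg_squares :: "('h::ab_group_add \<Rightarrow> 'h \<Rightarrow> complex) \<Rightarrow> (complex \<Rightarrow> 'h \<Rightarrow> 'h) \<Rightarrow> nat \<Rightarrow> bool" where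
  "kernel_neg_squares ip Q \<kappa> \<longleftrightarrow>
     (\<forall>n zs hs. (\<forall>i<n. zs i \<in> holo_dom ip Q) \<longrightarrow> neg_eig_count (gram ip Q n zs hs) \<le> \<kappa>) \<and>
     (\<exists>n zs hs. (\<forall>i<n. zs i \<in> holo_dom ip Q) \<and> neg_eig_count (gram ip Q n zs hs) = \<kappa>)"

definition N_kappa :: "(complex \<Rightarrow> 'h::ab_group_add \<Rightarrow> 'h) \<Rightarrow> ('h \<Rightarrow> 'h \<Rightarrow> complex) \<Rightarrow> nat \<Rightarrow> (complex \<Rightarrow> 'h \<Rightarrow> 'h) \<Rightarrow> bool" where
  "N_kappa sc ip \<kappa> Q \<longleftrightarrow>
     (\<forall>z\<in>holo_dom ip Q. bounded_op sc ip sc ip (Q z)) \<and>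
     (\<forall>z. Im z \<noteq> 0 \<longrightarrow> z \<notin> holo_dom ip Q \<longrightarrow> op_pole_at ip Q z) \<and>
     (\<forall>z\<in>holo_dom ip Q. cnj z \<in> holo_dom ip Q \<and> (\<forall>h g. ip (Q z h) g = ip h (Q (cnj z) g))) \<and>
     kernel_neg_squares ip Q \<kappa>"

definition Gamma_z :: "(complex \<Rightarrow> 'k::ab_group_add \<Rightarrow> 'k) \<Rightarrow> ('k \<times> 'k) set \<Rightarrow> ('h \<Rightarrow> 'k) \<Rightarrow> complex \<Rightarrow> complex \<Rightarrow> 'h \<Rightarrow> 'k" where
  "Gamma_z scK A \<Gamma> z0 z h = \<Gamma> h + scK (z - z0) (resolvent scK A z (\<Gamma> h))"

definition minimal_representation ::
  "(complex \<Rightarrow> 'h::ab_group_add \<Rightarrow> 'h) \<Rightarrow> ('h \<Rightarrow> 'h \<Rightarrow> complex) \<Rightarrow> (complex \<Rightarrow> 'h \<Rightarrow> 'h) \<Rightarrow>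
   (complex \<Rightarrow> 'k::ab_group_add \<Rightarrow> 'k) \<Rightarrow> ('k \<Rightarrow> 'k \<Rightarrow> complex) \<Rightarrow> ('k \<Rightarrow> 'k) \<Rightarrow>
   ('k \<times> 'k) set \<Rightarrow> ('h \<Rightarrow> 'k) \<Rightarrow> complex \<Rightarrow> bool" where
  "minimal_representation scH ipH Q scK ipK J A \<Gamma> z0 \<longleftrightarrow>
     pontryagin_space scK ipK J \<and>
     selfadjoint_relation ipK A \<and>
     bounded_op scH ipH scK (\<lambda>x y. ipK (J x) y) \<Gamma> \<and>
     z0 \<in> resolvent_set scK ipK J A \<and>
     (\<forall>z\<in>resolvent_set scK ipK J A. \<forall>h.
        Q z h = op_adjoint ipH ipH (Q z0) h
                + scH (z - cnj z0) (op_adjoint ipH ipK \<Gamma> (Gamma_z scK A \<Gamma> z0 z h))) \<and>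
     (\<forall>x. \<forall>e>0. \<exists>y \<in> module.span scK {Gamma_z scK A \<Gamma> z0 z h | z h. z \<in> resolvent_set scK ipK J A}.
        inorm (\<lambda>x y. ipK (J x) y) (x - y) < e) \<and>
     resolvent_set scK ipK J A = holo_dom ipH Q"

end

theory Submission
  imports Defs
begin

locale herm = vector_space sc for sc :: "complex \<Rightarrow> 'a::ab_group_add \<Rightarrow> 'a" +
  fixes ip :: "'a \<Rightarrow> 'a \<Rightarrow> complex"
  assumes herm: "hermitian_form sc ip"
begin

lemma herm_all: "(\<forall>x y z. ip (x + y) z = ip x z + ip y z) \<and>
     (\<forall>a x y. ip (sc a x) y = a * ip x y) \<and>
     (\<forall>x y. ip y x = cnj (ip x y))"
  using herm unfolding hermitian_form_def .
lemma add_left: "ip (x + y) z = ip x z + ip y z"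
  using herm_all[THEN conjunct1] by blast
lemma sc_left: "ip (sc a x) y = a * ip x y"
  using herm_all[THEN conjunct2, THEN conjunct1] by blast
lemma sym: "ip y x = cnj (ip x y)"
  using herm_all[THEN conjunct2, THEN conjunct2] by blast
lemma add_right: "ip x (y + z) = ip x y + ip x z"
proof -
  have "ip x (y + z) = cnj (ip (y + z) x)" by (rule sym)
  also have "\<dots> = cnj (ip y x) + cnj (ip z x)" by (simp add: add_left)
  also have "\<dots> = ip x y + ip x z" using sym[of y x] sym[of z x] by simp
  finally show ?thesis .
qed
lemma sc_right: "ip x (sc a y) = cnj a * ip x y"
proof -
  have "ip x (sc a y) = cnj (ip (sc a y) x)" by (rule sym)
  also have "\<dots> = cnj a * cnj (ip y x)" by (simp add: sc_left)
  also have "\<dots> = cnj a * ip x y" using sym[of y x] by simp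
  finally show ?thesis .
qed
lemma zero_left[simp]: "ip 0 y = 0"
  using sc_left[of 0 0 y] by simp
lemma zero_right[simp]: "ip x 0 = 0"
  using sc_right[of x 0 0] by simp
lemma minus_left: "ip (- x) y = - ip x y"
  using sc_left[of "-1" x y] by simp
lemma minus_right: "ip x (- y) = - ip x y"
  using sc_right[of x "-1" y] by simp
lemma diff_left: "ip (x - y) z = ip x z - ip y z"
  using add_left[of x "-y" z] minus_left[of y z] by simp
lemma diff_right: "ip x (y - z) = ip x y - ip x z"
  using add_right[of x y "-z"] minus_right[of x z] by simp
lemma diag_real: "Im (ip x x) = 0"
proof -
  from sym[of x x] have "Im (ip x x) = Im (cnj (ip x x))" by (rule arg_cong)
  thus ?thesis by simp
qed
lemma diag_ofreal: "ip x x = of_real (Re (ip x x))"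
  using diag_real by (simp add: complex_eq_iff)


lemma minus_eq: "- x = sc (-1) x"
  by simp

lemma expand: "Re (ip (x + sc t y) (x + sc t y)) =
   Re (ip x x) + 2 * Re (cnj t * ip x y) + (cmod t)^2 * Re (ip y y)"
proof -
  have e1: "ip (x + sc t y) (x + sc t y) = ip x x + cnj t * ip x y + t * ip y x + t * cnj t * ip y y"
    by (simp add: add_left add_right sc_left sc_right algebra_simps)
  have e2': "t * ip y x = cnj (cnj t * ip x y)" using sym[of x y] by simp
  have e2: "Re (t * ip y x) = Re (cnj t * ip x y)"
    unfolding e2' by simp
  have e3: "t * cnj t * ip y y = of_real ((cmod t)^2 * Re (ip y y))"
    using complex_norm_square[of t] diag_ofreal[of y] by (metis of_real_mult)
  show ?thesis unfolding e1 using e2 e3 by simp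
qed

lemma expand_r: "Re (ip (x + sc (- (of_real r * ip x y)) y) (x + sc (- (of_real r * ip x y)) y)) =
   Re (ip x x) - 2 * r * (cmod (ip x y))^2 + r^2 * (cmod (ip x y))^2 * Re (ip y y)"
proof -
  have a: "Re (cnj (- (of_real r * ip x y)) * ip x y) = - r * (cmod (ip x y))^2"
  proof -
    have n: "ip x y * cnj (ip x y) = of_real ((cmod (ip x y))^2)" by (rule complex_norm_square[symmetric])
    have "cnj (- (of_real r * ip x y)) * ip x y = - (of_real r * (ip x y * cnj (ip x y)))"
      by (simp add: algebra_simps)
    also have "\<dots> = of_real (- r * (cmod (ip x y))^2)"
      unfolding n by simp
    finally show ?thesis by (metis Re_complex_of_real)
  qed
  have b: "(cmod (- (of_real r * ip x y)))^2 = r^2 * (cmod (ip x y))^2"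
    by (simp add: norm_mult power_mult_distrib)
  show ?thesis unfolding expand a b by simp
qed

end

lemma quad_lemma:
  fixes a q b :: real
  assumes "\<And>r. 0 \<le> a - 2*r*q + r^2*q*b" "q \<ge> 0" "b \<ge> 0"
  shows "q \<le> a * b"
proof (cases "b = 0")
  case True
  show ?thesis
  proof (rule ccontr)
    assume "\<not> q \<le> a*b"
    hence q: "q > 0" using True by simp
    have "0 \<le> a - 2*((a+1)/(2*q))*q" using assms(1)[of "(a+1)/(2*q)"] True by simp
    also have "\<dots> = -1" using q by (simp add: field_simps)
    finally show False by simp
  qed
next
  case False
  hence b: "b > 0" using assms by simp
  have "0 \<le> a - 2*(1/b)*q + (1/b)^2*q*b" using assms(1) .
  also have "\<dots> = (a*b - q)/b" using b by (simp add: field_simps power2_eq_square)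
  finally show ?thesis using b by (simp add: zero_le_divide_iff)
qed

locale psd = herm +
  assumes pos: "0 \<le> Re (ip x x)"
begin

abbreviation nrm where "nrm x \<equiv> inorm ip x"

lemma nrm_nonneg: "0 \<le> nrm x"
  by (simp add: inorm_def pos)

lemma nrm_sq: "(nrm x)^2 = Re (ip x x)"
  using pos[of x] by (simp add: inorm_def)

lemma cs_sq: "(cmod (ip x y))^2 \<le> Re (ip x x) * Re (ip y y)"
proof (rule quad_lemma)
  fix r :: real
  show "0 \<le> Re (ip x x) - 2 * r * (cmod (ip x y))\<^sup>2 + r\<^sup>2 * (cmod (ip x y))\<^sup>2 * Re (ip y y)"
    using pos[of "x + sc (- (of_real r * ip x y)) y"] unfolding expand_r .
qed (simp_all add: pos)

lemma cs: "cmod (ip x y) \<le> nrm x * nrm y"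
proof -
  have "cmod (ip x y) \<le> sqrt (Re (ip x x) * Re (ip y y))"
    using cs_sq by (simp add: real_le_rsqrt)
  thus ?thesis by (simp add: inorm_def real_sqrt_mult)
qed

lemma nrm_triangle: "nrm (x + y) \<le> nrm x + nrm y"
proof -
  have "(nrm (x + y))^2 = Re (ip x x) + 2 * Re (ip x y) + Re (ip y y)"
    using expand[of x 1 y] by (simp add: nrm_sq)
  also have "\<dots> \<le> (nrm x)^2 + 2 * (nrm x * nrm y) + (nrm y)^2"
    using cs[of x y] complex_Re_le_cmod[of "ip x y"] by (simp add: nrm_sq)
  also have "\<dots> = (nrm x + nrm y)^2" by (simp add: power2_eq_square algebra_simps)
  finally show ?thesis
    using nrm_nonneg by (meson add_nonneg_nonneg power2_le_imp_le)
qed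

lemma nrm_scale: "nrm (sc a x) = cmod a * nrm x"
proof -
  have "Re (ip (sc a x) (sc a x)) = (cmod a)^2 * Re (ip x x)"
  proof -
    have "ip (sc a x) (sc a x) = (a * cnj a) * ip x x" by (simp add: sc_left sc_right)
    also have "\<dots> = of_real ((cmod a)^2 * Re (ip x x))"
    proof -
      have "a * cnj a = of_real ((cmod a)^2)" by (rule complex_norm_square[symmetric])
      thus ?thesis using diag_ofreal[of x] by (metis of_real_mult)
    qed
    finally show ?thesis by simp
  qed
  thus ?thesis by (simp add: inorm_def real_sqrt_mult)
qed

lemma nrm_minus: "nrm (- x) = nrm x"
  using nrm_scale[of "-1" x] by simp

lemma nrm_diff_sym: "nrm (x - y) = nrm (y - x)"
  using nrm_minus[of "x - y"] by simp

lemma nrm_diff_triangle: "nrm (x - z) \<le> nrm (x - y) + nrm (y - z)"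
  using nrm_triangle[of "x - y" "y - z"] by simp

lemma nrm_zero[simp]: "nrm 0 = 0"
  by (simp add: inorm_def)

end


locale hilb = psd +
  assumes definite: "ip x x = 0 \<Longrightarrow> x = 0"
    and complete: "\<And>X. (\<forall>e>0. \<exists>N. \<forall>m\<ge>N. \<forall>n\<ge>N. nrm (X m - X n) < e) \<Longrightarrow> \<exists>L. (\<lambda>n. nrm (X n - L)) \<longlonglongrightarrow> 0"
begin

lemma ip_zero_iff: "ip x x = 0 \<longleftrightarrow> x = 0"
  using definite by auto

lemma riesz:
  fixes \<phi> :: "'a \<Rightarrow> complex" and C :: real
  assumes add: "\<And>x y. \<phi> (x + y) = \<phi> x + \<phi> y" and scl: "\<And>a x. \<phi> (sc a x) = a * \<phi> x"
    and bnd: "\<And>x. cmod (\<phi> x) \<le> C * nrm x"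
  shows "\<exists>u. \<forall>x. \<phi> x = ip x u"
proof (cases "\<forall>x. \<phi> x = 0")
  case True then show ?thesis by (intro exI[of _ 0]) simp
next
  case False
  have phi_minus: "\<phi> (- x) = - \<phi> x" for x
    using scl[of "-1" x] by simp
  have phi_diff: "\<phi> (x - y) = \<phi> x - \<phi> y" for x y
    using add[of x "-y"] phi_minus[of y] by simp
  have phi0: "\<phi> 0 = 0" using scl[of 0 0] by simp
  from False obtain x1 where x1: "\<phi> x1 \<noteq> 0" by blast
  define S where "S = {x. \<phi> x = 1}"
  have x1S: "sc (1 / \<phi> x1) x1 \<in> S" using scl x1 by (simp add: S_def)
  define V where "V = (\<lambda>x. Re (ip x x)) ` S"
  define D where "D = Inf V"
  have bdd: "bdd_below V" unfolding V_def using pos by (intro bdd_belowI[of _ 0]) auto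
  have Vne: "V \<noteq> {}" using x1S by (auto simp: V_def)
  have Dlow: "D \<le> Re (ip x x)" if "x \<in> S" for x
    unfolding D_def using that bdd by (intro cInf_lower) (auto simp: V_def)
  have D0: "0 \<le> D" unfolding D_def using Vne by (intro cInf_greatest) (auto simp: V_def pos)
  have "\<exists>x\<in>S. Re (ip x x) < D + inverse (real (Suc k))" for k
  proof -
    have "Inf V < D + inverse (real (Suc k))" unfolding D_def by simp
    from cInf_lessD[OF Vne this] show ?thesis by (auto simp: V_def)
  qed
  then obtain X where XS: "\<And>k. X k \<in> S" and Xlt: "\<And>k. Re (ip (X k) (X k)) < D + inverse (real (Suc k))"
    by metis
  have para: "Re (ip (x - y) (x - y)) \<le> 2 * Re (ip x x) + 2 * Re (ip y y) - 4 * D"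
    if "x \<in> S" "y \<in> S" for x y
  proof -
    have m: "sc (1/2) (x + y) \<in> S" using that add scl by (simp add: S_def)
    have eq: "ip (sc (1/2) (x + y)) (sc (1/2) (x + y)) = (1/4) * ip (x + y) (x + y)"
      by (simp add: sc_left sc_right)
    have "Re (ip (sc (1/2) (x + y)) (sc (1/2) (x + y))) = Re ((1/4) * ip (x + y) (x + y))"
      by (simp only: eq)
    hence "D \<le> (1/4) * Re (ip (x + y) (x + y))" using Dlow[OF m] by simp
    moreover have "ip (x - y) (x - y) + ip (x + y) (x + y) = 2 * ip x x + 2 * ip y y"
      by (simp add: add_left add_right diff_left diff_right)
    hence "Re (ip (x - y) (x - y)) + Re (ip (x + y) (x + y)) = 2 * Re (ip x x) + 2 * Re (ip y y)"
      by (metis Re_complex_of_real plus_complex.sel(1) times_complex.sel(1) mult_2 )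
    ultimately show ?thesis by simp
  qed
  have cauchy: "\<forall>e>0. \<exists>N. \<forall>m\<ge>N. \<forall>n\<ge>N. nrm (X m - X n) < e"
  proof (intro allI impI)
    fix e :: real assume e: "e > 0"
    obtain N :: nat where N: "4 / e^2 < real N" using reals_Archimedean2 by blast
    show "\<exists>N. \<forall>m\<ge>N. \<forall>n\<ge>N. nrm (X m - X n) < e"
    proof (intro exI allI impI)
      fix m n assume mn: "N \<le> m" "N \<le> n"
      have im: "inverse (real (Suc m)) \<le> inverse (real (Suc N))" using mn
        by (simp add: le_imp_inverse_le)
      have inn: "inverse (real (Suc n)) \<le> inverse (real (Suc N))" using mn
        by (simp add: le_imp_inverse_le)
      have "Re (ip (X m - X n) (X m - X n)) \<le> 2 * Re (ip (X m) (X m)) + 2 * Re (ip (X n) (X n)) - 4 * D"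
        using para XS by blast
      also have "\<dots> < 4 * inverse (real (Suc N))"
        using Xlt[of m] Xlt[of n] im inn by linarith
      also have "\<dots> < e^2"
      proof -
        have "4 / e^2 < real (Suc N)" using N by simp
        hence "4 < e^2 * real (Suc N)" using e by (simp add: field_simps)
        thus ?thesis using e by (simp add: field_simps)
      qed
      finally have "(nrm (X m - X n))^2 < e^2" by (simp add: nrm_sq)
      thus "nrm (X m - X n) < e" using e nrm_nonneg by (meson power_less_imp_less_base less_imp_le)
    qed
  qed
  from complete[OF cauchy] obtain L where L: "(\<lambda>n. nrm (X n - L)) \<longlonglongrightarrow> 0" by blast
  have LS: "L \<in> S"
  proof -
    have "cmod (1 - \<phi> L) \<le> C * nrm (X n - L)" for n
    proof -
      have "1 - \<phi> L = \<phi> (X n - L)" using XS[of n] by (simp add: S_def phi_diff)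
      thus ?thesis using bnd by simp
    qed
    moreover have "(\<lambda>n. C * nrm (X n - L)) \<longlonglongrightarrow> 0"
      using tendsto_mult_right_zero[OF L] by simp
    ultimately have "cmod (1 - \<phi> L) \<le> 0"
      by (intro LIMSEQ_le_const[of "\<lambda>n. C * nrm (X n - L)"]) auto
    thus ?thesis by (simp add: S_def)
  qed
  have LD: "Re (ip L L) \<le> D"
  proof -
    have "nrm L \<le> sqrt (D + inverse (real (Suc n))) + nrm (X n - L)" for n
    proof -
      have "nrm L \<le> nrm (X n) + nrm (L - X n)"
        using nrm_triangle[of "X n" "L - X n"] by simp
      moreover have "nrm (X n) \<le> sqrt (D + inverse (real (Suc n)))"
        using Xlt[of n] by (simp add: inorm_def)
      ultimately show ?thesis using nrm_diff_sym[of L "X n"] by simp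
    qed
    moreover have "(\<lambda>n. sqrt (D + inverse (real (Suc n))) + nrm (X n - L)) \<longlonglongrightarrow> sqrt (D + 0) + 0"
      by (intro tendsto_intros L LIMSEQ_inverse_real_of_nat)
    ultimately have "nrm L \<le> sqrt D"
      by (intro LIMSEQ_le_const[of "\<lambda>n. sqrt (D + inverse (real (Suc n))) + nrm (X n - L)"]) auto
    hence "(nrm L)^2 \<le> (sqrt D)^2" using nrm_nonneg by (simp add: power_mono)
    thus ?thesis using D0 by (simp add: nrm_sq)
  qed
  have orth: "ip L y = 0" if y: "\<phi> y = 0" for y
  proof -
    have "(cmod (ip L y))^2 \<le> 0 * Re (ip y y)"
    proof (rule quad_lemma)
      fix r :: real
      have mem: "L + sc (- (of_real r * ip L y)) y \<in> S" using LS y by (simp add: S_def phi_diff scl)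
      have "Re (ip L L) \<le> Re (ip (L + sc (- (of_real r * ip L y)) y) (L + sc (- (of_real r * ip L y)) y))"
        using Dlow[OF mem] LD by linarith
      thus "0 \<le> 0 - 2 * r * (cmod (ip L y))\<^sup>2 + r\<^sup>2 * (cmod (ip L y))\<^sup>2 * Re (ip y y)"
        unfolding expand_r by simp
    qed (simp_all add: pos)
    thus ?thesis by simp
  qed
  have L0: "L \<noteq> 0" using LS phi0 by (auto simp: S_def)
  define c where "c = Re (ip L L)"
  have c: "ip L L = of_real c" unfolding c_def by (rule diag_ofreal)
  have cpos: "c \<noteq> 0"
  proof
    assume "c = 0" hence "ip L L = 0" using c by simp
    thus False using L0 definite by blast
  qed
  show ?thesis
  proof (intro exI allI)
    fix x
    define w where "w = x - sc (\<phi> x) L"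
    have "\<phi> w = \<phi> x - \<phi> x * \<phi> L" unfolding w_def by (simp only: phi_diff scl)
    hence "\<phi> w = 0" using LS by (simp add: S_def)
    hence "ip L w = 0" by (rule orth)
    hence "ip w L = 0" using sym[of w L] by (simp only: complex_cnj_zero)
    hence "ip x L - \<phi> x * ip L L = 0" unfolding w_def by (simp only: diff_left sc_left)
    hence e: "ip x L = \<phi> x * of_real c" unfolding c by simp
    have "ip x (sc (of_real (1 / c)) L) = of_real (1/c) * ip x L" by (simp add: sc_right)
    also have "\<dots> = \<phi> x" unfolding e using cpos by simp
    finally show "\<phi> x = ip x (sc (of_real (1 / c)) L)" by simp
  qed
qed

end

lemma hilbert_space_hilb:
  assumes "hilbert_space sc ip" shows "hilb sc ip"
proof -
  have h: "vector_space sc" "hermitian_form sc ip" "\<forall>x. 0 \<le> Re (ip x x)" "\<forall>x. ip x x = 0 \<longrightarrow> x = 0"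
    "\<forall>X. (\<forall>e>0. \<exists>N. \<forall>m\<ge>N. \<forall>n\<ge>N. inorm ip (X m - X n) < e)
          \<longrightarrow> (\<exists>L. (\<lambda>n. inorm ip (X n - L)) \<longlonglongrightarrow> 0)"
    using assms unfolding hilbert_space_def by blast+
  interpret herm sc ip using h(1,2) by (simp add: herm_def herm_axioms_def)
  interpret psd sc ip using h(3) by unfold_locales blast
  show ?thesis using h(4,5) by unfold_locales blast+
qed



lemma linear_add_sc:
  assumes "Vector_Spaces.linear s1 s2 f"
  shows "f (x + y) = f x + f y" "f (s1 a x) = s2 a (f x)"
  using assms unfolding Vector_Spaces.linear_iff by blast+

lemma small_le_zero:
  fixes c K d :: real
  assumes d: "d > 0" and h: "\<And>e. 0 < e \<Longrightarrow> e < d \<Longrightarrow> c \<le> e * K"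
  shows "c \<le> 0"
proof (rule ccontr)
  assume "\<not> c \<le> 0" hence c: "c > 0" by simp
  define e where "e = min (d/2) (c / (2 * (\<bar>K\<bar> + 1)))"
  have e0: "0 < e" using d c by (simp add: e_def)
  have ed: "e < d" using d by (simp add: e_def)
  have "e * K \<le> e * (\<bar>K\<bar> + 1)" using e0 by (intro mult_left_mono) auto
  also have "\<dots> \<le> (c / (2 * (\<bar>K\<bar> + 1))) * (\<bar>K\<bar> + 1)"
    by (intro mult_right_mono) (auto simp: e_def)
  also have "\<dots> = c / 2" by (simp add: field_simps)
  finally show False using h[OF e0 ed] c by simp
qed

locale pont = herm sc ip for sc :: "complex \<Rightarrow> 'a::ab_group_add \<Rightarrow> 'a" and ip +
  fixes J :: "'a \<Rightarrow> 'a"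
  assumes pont: "pontryagin_space sc ip J"
begin

lemma Jlin: "Vector_Spaces.linear sc sc J" using pont unfolding pontryagin_space_def by blast
lemma Jinv: "J (J x) = x" using pont unfolding pontryagin_space_def by blast
lemma Jsym: "ip (J x) y = ip x (J y)" using pont unfolding pontryagin_space_def by blast
lemma hilbJ: "hilbert_space sc (\<lambda>x y. ip (J x) y)" using pont unfolding pontryagin_space_def by blast

sublocale KJ: hilb sc "\<lambda>x y. ip (J x) y" by (rule hilbert_space_hilb[OF hilbJ])

abbreviation nJ where "nJ x \<equiv> inorm (\<lambda>x y. ip (J x) y) x"

lemma nJ_J: "nJ (J x) = nJ x"
  unfolding inorm_def using Jsym[of x x] by (simp add: Jinv)

lemma ind_cs: "cmod (ip x y) \<le> nJ x * nJ y"
  using KJ.cs[of "J x" y] by (simp add: Jinv nJ_J)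

lemma nondeg: assumes "ip x (J x) = 0" shows "x = 0"
proof -
  have "ip (J x) x = 0" using assms Jsym[of x x] by simp
  thus ?thesis by (rule KJ.definite)
qed

end

locale rel = pont sc ip J for sc :: "complex \<Rightarrow> 'a::ab_group_add \<Rightarrow> 'a" and ip J +
  fixes A :: "('a \<times> 'a) set"
  assumes sa: "selfadjoint_relation ip A"
begin

lemma A_mem: "(f, g) \<in> A \<longleftrightarrow> (\<forall>(u, v) \<in> A. ip g u = ip f v)"
proof -
  have "A = rel_adjoint ip A" using sa unfolding selfadjoint_relation_def .
  hence "(f, g) \<in> A \<longleftrightarrow> (f, g) \<in> rel_adjoint ip A" by simp
  thus ?thesis unfolding rel_adjoint_def by simp
qed

lemma A_add: assumes "(f1, g1) \<in> A" "(f2, g2) \<in> A" shows "(f1 + f2, g1 + g2) \<in> A"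
proof -
  have h1: "\<And>u v. (u, v) \<in> A \<Longrightarrow> ip g1 u = ip f1 v" using assms(1) A_mem[of f1 g1] by blast
  have h2: "\<And>u v. (u, v) \<in> A \<Longrightarrow> ip g2 u = ip f2 v" using assms(2) A_mem[of f2 g2] by blast
  have "\<forall>(u, v) \<in> A. ip (g1 + g2) u = ip (f1 + f2) v"
    using h1 h2 by (auto simp: add_left)
  thus ?thesis using A_mem[of "f1 + f2" "g1 + g2"] by blast
qed

lemma A_scale: assumes "(f, g) \<in> A" shows "(sc a f, sc a g) \<in> A"
proof -
  have h1: "\<And>u v. (u, v) \<in> A \<Longrightarrow> ip g u = ip f v" using assms(1) A_mem[of f g] by blast
  have "\<forall>(u, v) \<in> A. ip (sc a g) u = ip (sc a f) v"
    using h1 by (auto simp: sc_left)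
  thus ?thesis using A_mem[of "sc a f" "sc a g"] by blast
qed

lemma A_diff: "(f1, g1) \<in> A \<Longrightarrow> (f2, g2) \<in> A \<Longrightarrow> (f1 - f2, g1 - g2) \<in> A"
  using A_add[of f1 g1 "sc (-1) f2" "sc (-1) g2"] A_scale[of f2 g2 "-1"] by simp

abbreviation rho where "rho \<equiv> resolvent_set sc ip J A"
abbreviation R where "R \<equiv> resolvent sc A"

lemma res_char:
  assumes "z \<in> rho"
  obtains T where "bounded_op sc (\<lambda>x y. ip (J x) y) sc (\<lambda>x y. ip (J x) y) T" "R z = T"
    "\<And>x y. (x, y) \<in> rel_resolvent_rel sc A z \<longleftrightarrow> y = T x"
proof -
  from assms obtain T where T: "bounded_op sc (\<lambda>x y. ip (J x) y) sc (\<lambda>x y. ip (J x) y) T"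
    "\<And>x y. (x, y) \<in> rel_resolvent_rel sc A z \<longleftrightarrow> y = T x"
    unfolding resolvent_set_def by blast
  have "R z x = T x" for x unfolding resolvent_def using T(2) by simp
  hence "R z = T" by blast
  thus ?thesis using that T by blast
qed

lemma res_lin: assumes "z \<in> rho" shows "R z (x + y) = R z x + R z y" "R z (sc a x) = sc a (R z x)"
proof -
  obtain T where T: "bounded_op sc (\<lambda>x y. ip (J x) y) sc (\<lambda>x y. ip (J x) y) T" "R z = T"
    using res_char[OF assms] by metis
  have l: "Vector_Spaces.linear sc sc T" using T(1) unfolding bounded_op_def by blast
  show "R z (x + y) = R z x + R z y" using linear_add_sc(1)[OF l] T(2) by simp
  show "R z (sc a x) = sc a (R z x)" using linear_add_sc(2)[OF l] T(2) by simp
qed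

lemma res_bnd: assumes "z \<in> rho" obtains C where "C > 0" "\<And>x. nJ (R z x) \<le> C * nJ x"
proof -
  obtain C where C: "\<And>x. nJ (R z x) \<le> C * nJ x"
    using res_char[OF assms] unfolding bounded_op_def by metis
  have "nJ (R z x) \<le> (max C 1) * nJ x" for x
  proof -
    have "C * nJ x \<le> (max C 1) * nJ x" using KJ.nrm_nonneg[of x] by (intro mult_right_mono) auto
    thus ?thesis using C[of x] by linarith
  qed
  thus ?thesis using that[of "max C 1"] by simp
qed

lemma res_mem: assumes "z \<in> rho" shows "\<exists>g. (R z x, g) \<in> A \<and> x = g - sc z (R z x)"
proof -
  obtain T where "R z = T" "\<And>x y. (x, y) \<in> rel_resolvent_rel sc A z \<longleftrightarrow> y = T x"
    using res_char[OF assms] by metis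
  hence "(x, R z x) \<in> rel_resolvent_rel sc A z" by simp
  thus ?thesis unfolding rel_resolvent_rel_def by auto
qed

lemma res_eq: assumes "z \<in> rho" "(f, g) \<in> A" shows "R z (g - sc z f) = f"
proof -
  obtain T where "R z = T" "\<And>x y. (x, y) \<in> rel_resolvent_rel sc A z \<longleftrightarrow> y = T x"
    using res_char[OF assms(1)] by metis
  moreover have "(g - sc z f, f) \<in> rel_resolvent_rel sc A z"
    using assms(2) unfolding rel_resolvent_rel_def by blast
  ultimately show ?thesis by simp
qed

lemma res_identity:
  assumes z: "z \<in> rho" and w: "w \<in> rho"
  shows "sc (z - w) (R w (R z x)) = R z x - R w x"
proof -
  define u where "u = R z x"
  define v where "v = R w x"
  obtain gu where gu: "(u, gu) \<in> A" "x = gu - sc z u" using res_mem[OF z] u_def by blast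
  obtain gv where gv: "(v, gv) \<in> A" "x = gv - sc w v" using res_mem[OF w] v_def by blast
  have "(u - v, gu - gv) \<in> A" using A_diff[OF gu(1) gv(1)] .
  hence "R w ((gu - gv) - sc w (u - v)) = u - v" by (rule res_eq[OF w])
  moreover have "(gu - gv) - sc w (u - v) = sc (z - w) u"
  proof -
    have "gu = x + sc z u" using gu(2) by (simp add: algebra_simps)
    moreover have "gv = x + sc w v" using gv(2) by (simp add: algebra_simps)
    ultimately show ?thesis by (simp add: algebra_simps)
  qed
  ultimately have "R w (sc (z - w) u) = u - v" by simp
  thus ?thesis using res_lin(2)[OF w] u_def v_def by simp
qed

lemma res_adj:
  assumes z: "z \<in> rho" and zc: "cnj z \<in> rho"
  shows "ip (R z x) y = ip x (R (cnj z) y)"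
proof -
  define u where "u = R z x"
  define v where "v = R (cnj z) y"
  obtain gu where gu: "(u, gu) \<in> A" "x = gu - sc z u" using res_mem[OF z] u_def by blast
  obtain gv where gv: "(v, gv) \<in> A" "y = gv - sc (cnj z) v" using res_mem[OF zc] v_def by blast
  have s: "ip gu v = ip u gv" using gu(1) gv(1) A_mem[of u gu] by blast
  have "ip u y = ip u gv - z * ip u v" unfolding gv(2) by (simp add: diff_right sc_right)
  moreover have "ip x v = ip gu v - z * ip u v" unfolding gu(2) by (simp add: diff_left sc_left)
  ultimately show ?thesis using s u_def v_def by simp
qed

lemma res_near_bnd:
  assumes z: "z \<in> rho" and w: "w \<in> rho" and C: "\<And>x. nJ (R z x) \<le> C * nJ x" and Cp: "C > 0"
    and close: "cmod (w - z) * C \<le> 1/2"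
  shows "nJ (R w x) \<le> 2 * C * nJ x"
proof -
  have eq: "R w x = R z x + sc (w - z) (R z (R w x))"
    using res_identity[OF w z, of x] by (simp add: algebra_simps)
  have "nJ (R w x) \<le> nJ (R z x) + nJ (sc (w - z) (R z (R w x)))"
    unfolding eq[symmetric] using KJ.nrm_triangle eq by metis
  also have "\<dots> = nJ (R z x) + cmod (w - z) * nJ (R z (R w x))" by (simp add: KJ.nrm_scale)
  also have "\<dots> \<le> C * nJ x + cmod (w - z) * (C * nJ (R w x))"
    using C[of x] C[of "R w x"] by (intro add_mono mult_left_mono) auto
  also have "\<dots> \<le> C * nJ x + (1/2) * nJ (R w x)"
  proof -
    have "(cmod (w - z) * C) * nJ (R w x) \<le> (1/2) * nJ (R w x)"
      by (rule mult_right_mono[OF close KJ.nrm_nonneg])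
    thus ?thesis by (simp add: mult.assoc)
  qed
  finally show ?thesis by simp
qed

end



theorem corollary6:
  fixes scH :: "complex \<Rightarrow> 'h::ab_group_add \<Rightarrow> 'h" and ipH :: "'h \<Rightarrow> 'h \<Rightarrow> complex"
    and Q :: "complex \<Rightarrow> 'h \<Rightarrow> 'h" and \<kappa> :: nat
    and scK :: "complex \<Rightarrow> 'k::ab_group_add \<Rightarrow> 'k" and ipK :: "'k \<Rightarrow> 'k \<Rightarrow> complex"
    and J :: "'k \<Rightarrow> 'k" and A :: "('k \<times> 'k) set" and \<Gamma> :: "'h \<Rightarrow> 'k"
    and z0 z0' :: complex and h :: 'h
  assumes "hilbert_space scH ipH"
    and "N_kappa scH ipH \<kappa> Q"
    and "minimal_representation scH ipH Q scK ipK J A \<Gamma> z0"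
    and "z0' \<in> holo_dom ipH Q"
    and "h \<noteq> 0"
    and "\<forall>w\<in>holo_dom ipH Q. \<forall>g. kerQ ipH Q z0' w h g = 0"
  shows "\<forall>z\<in>holo_dom ipH Q. Gamma_z scK A \<Gamma> z0 z h = 0"
proof -
  let ?dom = "holo_dom ipH Q"
  have pK: "pontryagin_space scK ipK J" and saA: "selfadjoint_relation ipK A"
    and bG: "bounded_op scH ipH scK (\<lambda>x y. ipK (J x) y) \<Gamma>"
    and repr: "\<forall>z\<in>resolvent_set scK ipK J A. \<forall>h.
        Q z h = op_adjoint ipH ipH (Q z0) h
                + scH (z - cnj z0) (op_adjoint ipH ipK \<Gamma> (Gamma_z scK A \<Gamma> z0 z h))"
    and dense: "\<forall>x. \<forall>e>0. \<exists>y \<in> module.span scK {Gamma_z scK A \<Gamma> z0 z h | z h. z \<in> resolvent_set scK ipK J A}.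
        inorm (\<lambda>x y. ipK (J x) y) (x - y) < e"
    and rd: "resolvent_set scK ipK J A = holo_dom ipH Q"
    using assms(3) unfolding minimal_representation_def by blast+
  interpret H: hilb scH ipH by (rule hilbert_space_hilb[OF assms(1)])
  have vsK: "vector_space scK" and hfK: "hermitian_form scK ipK"
    using pK unfolding pontryagin_space_def by blast+
  interpret K: rel scK ipK J A
    using vsK hfK pK saA by (simp add: rel_def pont_def herm_def rel_axioms_def pont_axioms_def herm_axioms_def)
  have cc: "cnj z \<in> ?dom" if "z \<in> ?dom" for z
    using assms(2) that unfolding N_kappa_def by blast
  have rho: "z \<in> K.rho \<longleftrightarrow> z \<in> ?dom" for z using rd by simp
  define G where "G = Gamma_z scK A \<Gamma> z0"
  define Gp where "Gp = op_adjoint ipH ipK \<Gamma>"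
  define Q0 where "Q0 = op_adjoint ipH ipH (Q z0)"
  have Gdef: "G z x = \<Gamma> x + scK (z - z0) (K.R z (\<Gamma> x))" for z x
    unfolding G_def Gamma_z_def ..
  have lG: "Vector_Spaces.linear scH scK \<Gamma>" using bG unfolding bounded_op_def by blast
  obtain CG where CG: "\<And>x. K.nJ (\<Gamma> x) \<le> CG * H.nrm x"
    using bG unfolding bounded_op_def by blast
  have adjG: "ipH (Gp y) g = ipK y (\<Gamma> g)" for y g
  proof -
    have ex: "\<exists>u. \<forall>x. ipK (\<Gamma> x) y = ipH x u"
    proof (rule H.riesz[where C = "CG * K.nJ y"])
      show "ipK (\<Gamma> (x + x')) y = ipK (\<Gamma> x) y + ipK (\<Gamma> x') y" for x x'
        using linear_add_sc(1)[OF lG] by (simp add: K.add_left)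
      show "ipK (\<Gamma> (scH a x)) y = a * ipK (\<Gamma> x) y" for a x
        using linear_add_sc(2)[OF lG] by (simp add: K.sc_left)
      show "cmod (ipK (\<Gamma> x) y) \<le> CG * K.nJ y * H.nrm x" for x
      proof -
        have "cmod (ipK (\<Gamma> x) y) \<le> K.nJ (\<Gamma> x) * K.nJ y" by (rule K.ind_cs)
        also have "\<dots> \<le> (CG * H.nrm x) * K.nJ y"
          using CG[of x] K.KJ.nrm_nonneg[of y] by (rule mult_right_mono)
        finally show ?thesis by (simp add: mult_ac)
      qed
    qed
    then obtain u where u: "\<And>x. ipK (\<Gamma> x) y = ipH x u" by blast
    have uniq: "u' = u" if "\<forall>x. ipK (\<Gamma> x) y = ipH x u'" for u'
    proof -
      have "ipH (u' - u) (u' - u) = 0"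
        using that u[of "u' - u"] by (simp add: H.diff_right)
      hence "u' - u = 0" by (rule H.definite)
      thus ?thesis by simp
    qed
    have "Gp y = u" unfolding Gp_def op_adjoint_def
      using u uniq by (intro the_equality) auto
    hence "ipH g (Gp y) = ipK (\<Gamma> g) y" using u by simp
    thus ?thesis using H.sym[of g "Gp y"] K.sym[of "\<Gamma> g" y] by simp
  qed
  have step1: "ipH (Q u h) g = ipH (Q z0' h) g" if "u \<in> ?dom" for u g
  proof (cases "u = z0'")
    case False
    have w: "cnj u \<in> ?dom" using cc[OF that] .
    have ne: "z0' \<noteq> cnj (cnj u)" using False by simp
    have "kerQ ipH Q z0' (cnj u) h g = 0" using assms(6) w by blast
    hence "ipH (Q z0' h - Q u h) g / (z0' - u) = 0" using ne unfolding kerQ_def by simp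
    hence "ipH (Q z0' h - Q u h) g = 0" using False by simp
    thus ?thesis by (simp add: H.diff_left)
  qed simp
  have kernel: "(z - cnj w) * ipK (G z h') (G w g) = ipH (Q z h') g - ipH (Q (cnj w) h') g"
    if "z \<in> ?dom" "w \<in> ?dom" "z \<noteq> cnj w" for z w h' g
  proof -
    have zr: "z \<in> K.rho" and wr: "w \<in> K.rho" and wcr: "cnj w \<in> K.rho"
      using that cc rho by auto
    have wccr: "cnj (cnj w) \<in> K.rho" using wr by simp
    define P where "P = ipK (\<Gamma> h') (\<Gamma> g)"
    define X1 where "X1 = ipK (K.R z (\<Gamma> h')) (\<Gamma> g)"
    define X2 where "X2 = ipK (K.R (cnj w) (\<Gamma> h')) (\<Gamma> g)"
    define Y where "Y = ipK (K.R (cnj w) (K.R z (\<Gamma> h'))) (\<Gamma> g)"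
    have a1: "ipK (\<Gamma> h') (K.R w (\<Gamma> g)) = X2"
      using K.res_adj[OF wcr wccr, of "\<Gamma> h'" "\<Gamma> g"] unfolding X2_def by simp
    have a2: "ipK (K.R z (\<Gamma> h')) (K.R w (\<Gamma> g)) = Y"
      using K.res_adj[OF wcr wccr, of "K.R z (\<Gamma> h')" "\<Gamma> g"] unfolding Y_def by simp
    have eY: "(z - cnj w) * Y = X1 - X2"
    proof -
      have "ipK (scK (z - cnj w) (K.R (cnj w) (K.R z (\<Gamma> h')))) (\<Gamma> g)
            = ipK (K.R z (\<Gamma> h') - K.R (cnj w) (\<Gamma> h')) (\<Gamma> g)"
        using K.res_identity[OF zr wcr, of "\<Gamma> h'"] by simp
      thus ?thesis unfolding Y_def X1_def X2_def by (simp add: K.sc_left K.diff_left)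
    qed
    have e1: "ipK (G z h') (G w g) = P + cnj (w - z0) * X2 + (z - z0) * X1 + (z - z0) * cnj (w - z0) * Y"
    proof -
      have "ipK (G z h') (G w g) = ipK (\<Gamma> h') (\<Gamma> g) + cnj (w - z0) * ipK (\<Gamma> h') (K.R w (\<Gamma> g))
          + ((z - z0) * ipK (K.R z (\<Gamma> h')) (\<Gamma> g) + (z - z0) * (cnj (w - z0) * ipK (K.R z (\<Gamma> h')) (K.R w (\<Gamma> g))))"
        unfolding Gdef by (simp only: K.add_left K.add_right K.sc_left K.sc_right) (simp add: algebra_simps)
      thus ?thesis unfolding a1 a2 P_def X1_def by (simp add: algebra_simps)
    qed
    have gG: "ipK (G u h') (\<Gamma> g) = P + (u - z0) * ipK (K.R u (\<Gamma> h')) (\<Gamma> g)" for u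
      unfolding Gdef P_def by (simp add: K.add_left K.sc_left)
    have qe: "ipH (Q u h') g = ipH (Q0 h') g + (u - cnj z0) * (P + (u - z0) * ipK (K.R u (\<Gamma> h')) (\<Gamma> g))"
      if "u \<in> K.rho" for u
    proof -
      have "Q u h' = Q0 h' + scH (u - cnj z0) (Gp (G u h'))"
        using repr that unfolding Q0_def Gp_def G_def by blast
      hence "ipH (Q u h') g = ipH (Q0 h') g + (u - cnj z0) * ipH (Gp (G u h')) g"
        by (simp add: H.add_left H.sc_left)
      thus ?thesis using adjG gG by simp
    qed
    have e2: "ipH (Q z h') g = ipH (Q0 h') g + (z - cnj z0) * (P + (z - z0) * X1)"
      using qe[OF zr] unfolding X1_def .
    have e3: "ipH (Q (cnj w) h') g = ipH (Q0 h') g + (cnj w - cnj z0) * (P + (cnj w - z0) * X2)"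
      using qe[OF wcr] unfolding X2_def .
    have eY2: "(z - cnj w) * ((z - z0) * cnj (w - z0) * Y) = (z - z0) * cnj (w - z0) * (X1 - X2)"
      using eY by (metis mult.assoc mult.commute)
    have "(z - cnj w) * ipK (G z h') (G w g)
        = (z - cnj w) * (P + cnj (w - z0) * X2 + (z - z0) * X1) + (z - z0) * cnj (w - z0) * (X1 - X2)"
      unfolding e1 eY2[symmetric] by (simp add: algebra_simps)
    also have "\<dots> = ipH (Q z h') g - ipH (Q (cnj w) h') g"
      unfolding e2 e3 by (simp add: algebra_simps)
    finally show ?thesis .
  qed
  have orth1: "ipK (G z h) (G w g) = 0" if "z \<in> ?dom" "w \<in> ?dom" "z \<noteq> cnj w" for z w g
  proof -
    have "(z - cnj w) * ipK (G z h) (G w g) = 0"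
      using kernel[OF that, of h g] step1[OF that(1), of g] step1[OF cc[OF that(2)], of g] by simp
    thus ?thesis using that(3) by simp
  qed
  have orth2: "ipK (G z h) (G (cnj z) g) = 0" if zd: "z \<in> ?dom" for z g
  proof -
    define X where "X = G z h"
    define a where "a = (\<lambda>u. ipK (K.R u X) (\<Gamma> g))"
    define f where "f = (\<lambda>u. ipK X (\<Gamma> g) + (u - cnj z0) * a u)"
    have fu: "ipK X (G (cnj u) g) = f u" if "u \<in> ?dom" for u
    proof -
      have ur: "u \<in> K.rho" and ucr: "cnj u \<in> K.rho" using that cc rho by auto
      have "ipK X (G (cnj u) g) = ipK X (\<Gamma> g) + cnj (cnj u - z0) * ipK X (K.R (cnj u) (\<Gamma> g))"
        unfolding Gdef by (simp only: K.add_right K.sc_right)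
      also have "ipK X (K.R (cnj u) (\<Gamma> g)) = a u"
        unfolding a_def using K.res_adj[OF ur ucr] by simp
      finally show ?thesis unfolding f_def by simp
    qed
    have fzero: "f u = 0" if "u \<in> ?dom" "u \<noteq> z" for u
    proof -
      have "ipK (G z h) (G (cnj u) g) = 0"
        using orth1[OF zd cc[OF that(1)]] that(2) by simp
      thus ?thesis using fu[OF that(1)] unfolding X_def by simp
    qed
    have zr: "z \<in> K.rho" using zd rho by simp
    obtain C where Cp: "C > 0" and C: "\<And>x. K.nJ (K.R z x) \<le> C * K.nJ x"
      using K.res_bnd[OF zr] by blast
    from zd obtain U where U: "open U" "z \<in> U" "\<forall>h g. (\<lambda>w. ipH (Q w h) g) holomorphic_on U"
      unfolding holo_dom_def by blast
    have Ud: "U \<subseteq> ?dom" using U unfolding holo_dom_def by blast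
    obtain \<delta> where \<delta>: "\<delta> > 0" "ball z \<delta> \<subseteq> U" using U(1,2) open_contains_ball by blast
    define M where "M = 2 * C * K.nJ X * K.nJ (\<Gamma> g)"
    have "cmod (f z) \<le> 0"
    proof (rule small_le_zero[of "min \<delta> (1 / (2 * C))"])
      show "0 < min \<delta> (1 / (2 * C))" using \<delta> Cp by simp
      fix e :: real assume e: "0 < e" "e < min \<delta> (1 / (2 * C))"
      define u where "u = z + of_real e"
      have "u \<in> ball z \<delta>" using e unfolding u_def by (simp add: dist_norm)
      hence ud: "u \<in> ?dom" using \<delta>(2) Ud by blast
      have ur: "u \<in> K.rho" using ud rho by simp
      have une: "u \<noteq> z" using e unfolding u_def by simp
      have cu: "cmod (u - z) = e" using e unfolding u_def by simp
      have close: "cmod (u - z) * C \<le> 1/2" using e Cp unfolding cu by (simp add: field_simps)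
      have nRu: "K.nJ (K.R u X) \<le> 2 * C * K.nJ X"
        by (rule K.res_near_bnd[OF zr ur C Cp close])
      have ngn: "0 \<le> K.nJ (\<Gamma> g)" by (rule K.KJ.nrm_nonneg)
      have au: "cmod (a u) \<le> M"
      proof -
        have "cmod (a u) \<le> K.nJ (K.R u X) * K.nJ (\<Gamma> g)" unfolding a_def by (rule K.ind_cs)
        also have "\<dots> \<le> (2 * C * K.nJ X) * K.nJ (\<Gamma> g)" using nRu ngn by (rule mult_right_mono)
        finally show ?thesis unfolding M_def .
      qed
      have adiff: "a u - a z = (u - z) * ipK (K.R z (K.R u X)) (\<Gamma> g)"
      proof -
        have "ipK (scK (u - z) (K.R z (K.R u X))) (\<Gamma> g) = ipK (K.R u X - K.R z X) (\<Gamma> g)"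
          using K.res_identity[OF ur zr, of X] by simp
        thus ?thesis unfolding a_def by (simp add: K.sc_left K.diff_left)
      qed
      have b2: "cmod (ipK (K.R z (K.R u X)) (\<Gamma> g)) \<le> C * M"
      proof -
        have "cmod (ipK (K.R z (K.R u X)) (\<Gamma> g)) \<le> K.nJ (K.R z (K.R u X)) * K.nJ (\<Gamma> g)"
          by (rule K.ind_cs)
        also have "\<dots> \<le> (C * K.nJ (K.R u X)) * K.nJ (\<Gamma> g)" using C ngn by (rule mult_right_mono)
        also have "\<dots> \<le> (C * (2 * C * K.nJ X)) * K.nJ (\<Gamma> g)"
          using nRu Cp ngn by (intro mult_right_mono mult_left_mono) auto
        finally show ?thesis unfolding M_def by (simp add: mult_ac)
      qed
      have "f z = f z - f u" using fzero[OF ud une] by simp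
      also have "\<dots> = (z - cnj z0) * (a z - a u) - (u - z) * a u"
        unfolding f_def by (simp add: algebra_simps)
      also have "\<dots> = - ((z - cnj z0) * (u - z) * ipK (K.R z (K.R u X)) (\<Gamma> g)) - (u - z) * a u"
      proof -
        have "a z - a u = - ((u - z) * ipK (K.R z (K.R u X)) (\<Gamma> g))" using adiff by (metis minus_diff_eq)
        thus ?thesis by simp
      qed
      finally have fz0: "f z = - ((z - cnj z0) * (u - z) * ipK (K.R z (K.R u X)) (\<Gamma> g)) - (u - z) * a u" .
      have fz: "cmod (f z) \<le> cmod (z - cnj z0) * e * cmod (ipK (K.R z (K.R u X)) (\<Gamma> g)) + e * cmod (a u)"
      proof -
        have "cmod (f z) \<le> cmod (- ((z - cnj z0) * (u - z) * ipK (K.R z (K.R u X)) (\<Gamma> g))) + cmod ((u - z) * a u)"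
          unfolding fz0 by (rule norm_triangle_ineq4)
        also have "\<dots> = cmod (z - cnj z0) * e * cmod (ipK (K.R z (K.R u X)) (\<Gamma> g)) + e * cmod (a u)"
          by (simp only: norm_minus_cancel norm_mult cu)
        finally show ?thesis .
      qed
      also have "\<dots> \<le> cmod (z - cnj z0) * e * (C * M) + e * M"
        using b2 au e by (intro add_mono mult_left_mono) auto
      also have "\<dots> = e * (cmod (z - cnj z0) * C * M + M)" by (simp add: algebra_simps)
      finally show "cmod (f z) \<le> e * (cmod (z - cnj z0) * C * M + M)" .
    qed
    hence "f z = 0" by simp
    thus ?thesis using fu[OF zd] unfolding X_def by simp
  qed
  have orth: "ipK (G z h) (G w g) = 0" if "z \<in> ?dom" "w \<in> ?dom" for z w g
  proof (cases "z = cnj w")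
    case True
    hence "w = cnj z" by simp
    thus ?thesis using orth2[OF that(1)] by simp
  next
    case False thus ?thesis using orth1[OF that] by simp
  qed
  show ?thesis
  proof
    fix z assume z: "z \<in> ?dom"
    define X where "X = G z h"
    have span0: "ipK X y = 0" if "y \<in> module.span scK {G w g | w g. w \<in> K.rho}" for y
      using that
    proof (induct rule: K.span_induct)
      case base show ?case
        unfolding K.subspace_def by (simp add: K.add_right K.sc_right)
    next
      case (step y) thus ?case using orth[OF z] rho unfolding X_def by blast
    qed
    have "cmod (ipK X (J X)) \<le> 0"
    proof (rule small_le_zero[of 1])
      fix e :: real assume e: "0 < e"
      obtain y where y: "y \<in> module.span scK {G w g | w g. w \<in> K.rho}" "K.nJ (J X - y) < e"
        using dense e unfolding G_def by blast
      have "ipK X (J X) = ipK X (J X - y)" using span0[OF y(1)] by (simp add: K.diff_right)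
      hence "cmod (ipK X (J X)) \<le> K.nJ X * K.nJ (J X - y)" using K.ind_cs by simp
      also have "\<dots> \<le> K.nJ X * e" using y(2) K.KJ.nrm_nonneg[of X] by (intro mult_left_mono) auto
      finally show "cmod (ipK X (J X)) \<le> e * K.nJ X" by (simp add: mult.commute)
    qed simp
    hence "ipK X (J X) = 0" by simp
    hence "X = 0" by (rule K.nondeg)
    thus "Gamma_z scK A \<Gamma> z0 z h = 0" unfolding X_def G_def .
  qed
qed

end
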